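(* Let $\phi\in\mathcal S$, $\theta>0$ and $n,k\ge1$. Let $X_{1,\theta},\dots,X_{n,\theta}$ be iid nonnegative infinitely divisible random variables with mean $1$ and Laplace transform $$\mathbf E(e^{-xX_{1,\theta}})=e^{\theta\phi(-x/(\theta\phi_1))}=e^{-\theta\psi(x/(\theta\phi_1))},\quad x\ge0,$$ where $\psi(x)=-\phi(-x)$. Put $\overline X_{n,\theta}=\sum_{m=1}^nX_{m,\theta}$ and $S_{m,\theta}=X_{m,\theta}/\overline X_{n,\theta}$. Then for all $(k_1,\dots,k_n)\in\mathbb N_0^n$ with $k_1+\dots+k_n=k$, $$\mathbf P(\mathbf K_{n,k}=(k_1,\dots,k_n))=\binom{k}{k_1\dots k_n}\frac{\prod_{m=1}^n\mathbf E(X_{m,\theta}^{k_m})}{\mathbf E(\overline X_{n,\theta}^k)}=\binom{k}{k_1\dots k_n}\frac{\mathbf E\left(\overline X_{n,\theta}^k\prod_{m=1}^nS_{m,\theta}^{k_m}\right)}{\mathbf E(\overline X_{n,\theta}^k)}.$$ That is, the occupancy law of $\mathbf K_{n,k}$ is the multinomial sampling law from the random partition of unity $(S_{1,\theta},\dots,S_{n,\theta})$, biased by $\overline X_{n,\theta}^k$.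
   Context: Let $(\phi_m)_{m\ge1}$ be nonnegative reals with $\phi_1>0$, and let $\phi(x)=\sum_{m\ge1}\phi_mx^m/m!$ have radius of convergence $x_0\in(0,\infty]$. We write $\phi\in\mathcal S$ if $\phi$ is finite on $(-\infty,x_0)$ and $\phi'$ is absolutely monotone there (all derivatives of $\phi'$ nonnegative on $(-\infty,x_0)$). For $\theta>0$ define the polynomials $\sigma_k(\theta)$ by $e^{\theta\phi(x)}=1+\sum_{k\ge1}\sigma_k(\theta)x^k/k!$, with $\sigma_0\equiv1$. $\mathbf K_{n,k}$ is a random vector in $\mathbb N_0^n$ with $$\mathbf P(\mathbf K_{n,k}=(k_1,\dots,k_n))=\frac{k!}{\sigma_k(n\theta)}\prod_{m=1}^n\frac{\sigma_{k_m}(\theta)}{k_m!}\quad\text{for } \sum k_m=k.$$ This is the law of $n$ iid variables $\xi_i$ with pgf $\exp(\theta(\phi(xu)-\phi(x)))$, $x\in(0,x_0)$, conditioned on their sum being $k$. *)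

theory Defs
  imports "HOL-Probability.Probability" "HOL-Computational_Algebra.Formal_Power_Series"
begin

text \<open>Coefficients c m (m >= 1) of phi(x) = sum_{m>=1} c m x^m / m!.  c 0 is ignored.\<close>

definition phi_series :: "(nat \<Rightarrow> real) \<Rightarrow> real \<Rightarrow> real" where
  "phi_series c x = (\<Sum>m. c (Suc m) / fact (Suc m) * x ^ Suc m)"

definition phi_radius :: "(nat \<Rightarrow> real) \<Rightarrow> ereal" where
  "phi_radius c = conv_radius (\<lambda>m. if m = 0 then 0 else c m / fact m)"

definition absolutely_monotone_on :: "(real \<Rightarrow> real) \<Rightarrow> real set \<Rightarrow> bool" where
  "absolutely_monotone_on g A \<longleftrightarrow>
     (\<forall>j. \<forall>x\<in>A. (deriv ^^ j) g differentiable (at x) \<and> (deriv ^^ j) g x \<ge> 0)"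

definition in_class_S :: "(nat \<Rightarrow> real) \<Rightarrow> (real \<Rightarrow> real) \<Rightarrow> bool" where
  "in_class_S c f \<longleftrightarrow>
     (\<forall>x. ereal \<bar>x\<bar> < phi_radius c \<longrightarrow> f x = phi_series c x) \<and>
     (\<forall>x. ereal x < phi_radius c \<longrightarrow> f differentiable (at x)) \<and>
     absolutely_monotone_on (deriv f) {x. ereal x < phi_radius c}"

definition phi_fps :: "(nat \<Rightarrow> real) \<Rightarrow> real fps" where
  "phi_fps c = Abs_fps (\<lambda>m. if m = 0 then 0 else c m / fact m)"

definition sigma :: "(nat \<Rightarrow> real) \<Rightarrow> nat \<Rightarrow> real \<Rightarrow> real" where
  "sigma c k \<theta> = fact k * fps_nth (fps_exp \<theta> oo phi_fps c) k"

definition K_prob :: "(nat \<Rightarrow> real) \<Rightarrow> real \<Rightarrow> nat \<Rightarrow> nat \<Rightarrow> (nat \<Rightarrow> nat) \<Rightarrow> real" where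
  "K_prob c \<theta> n k ks =
     fact k / sigma c k (real n * \<theta>) * (\<Prod>m\<in>{1..n}. sigma c (ks m) \<theta> / fact (ks m))"

definition multinomial_coeff :: "nat \<Rightarrow> nat \<Rightarrow> (nat \<Rightarrow> nat) \<Rightarrow> real" where
  "multinomial_coeff n k ks = fact k / (\<Prod>m\<in>{1..n}. fact (ks m))"

end

theory Submission
  imports Defs "HOL-Complex_Analysis.Complex_Analysis"
begin

lemma aux_alg: "(K::complex) * s = A * C \<Longrightarrow> K * (-1) ^ Suc i * s ^ (Suc q) = - (A * (C * (-1) ^ i * s ^ q))"
  by (simp add: power_Suc algebra_simps)

lemma alt_binom_pow:
  "m \<le> j \<Longrightarrow> (\<Sum>i\<le>j. of_nat (j choose i) * (-1)^i * of_nat i ^ m :: complex)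
     = (if m = j then (-1)^j * fact j else 0)"
proof (induction j arbitrary: m)
  case 0 then show ?case by simp
next
  case (Suc j)
  show ?case
  proof (cases m)
    case 0
    have "(\<Sum>i\<le>Suc j. of_nat (Suc j choose i) * (-1)^i * of_nat i ^ m :: complex)
        = (\<Sum>i\<le>Suc j. (-1)^i * of_nat (Suc j choose i))" using 0 by (simp add: mult.commute)
    also have "\<dots> = 0" by (rule choose_alternating_sum) simp
    finally show ?thesis using 0 by simp
  next
    case (Suc m')
    have mj: "m' \<le> j" using Suc.prems Suc by simp
    have "(\<Sum>i\<le>Suc j. of_nat (Suc j choose i) * (-1)^i * of_nat i ^ m :: complex)
        = (\<Sum>i\<le>j. of_nat (Suc j choose Suc i) * (-1)^Suc i * of_nat (Suc i) ^ m)"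
      using Suc by (subst sum.atMost_Suc_shift) simp
    also have "\<dots> = (\<Sum>i\<le>j. - (of_nat (Suc j) * (of_nat (j choose i) * (-1)^i * of_nat (Suc i) ^ m')))"
    proof (intro sum.cong refl)
      fix i
      have "Suc i * (Suc j choose Suc i) = Suc j * (j choose i)"
        using times_binomial_minus1_eq[of "Suc i" "Suc j"] by simp
      hence "(of_nat (Suc j choose Suc i) * of_nat (Suc i) :: complex) = of_nat (Suc j) * of_nat (j choose i)"
        by (metis of_nat_mult mult.commute)
      thus "of_nat (Suc j choose Suc i) * (-1)^Suc i * of_nat (Suc i) ^ m
          = (- (of_nat (Suc j) * (of_nat (j choose i) * (-1)^i * of_nat (Suc i) ^ m')) :: complex)"
        unfolding \<open>m = Suc m'\<close> by (rule aux_alg)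
    qed
    also have "\<dots> = - (of_nat (Suc j) * (\<Sum>i\<le>j. of_nat (j choose i) * (-1)^i * (\<Sum>l\<le>m'. of_nat (m' choose l) * of_nat i ^ l)))"
    proof -
      have binom: "(of_nat (Suc i)::complex)^m' = (\<Sum>l\<le>m'. of_nat (m' choose l) * of_nat i ^ l)" for i
        using binomial_ring[of "of_nat i :: complex" 1 m'] by (simp add: add.commute)
      show ?thesis by (simp only: binom sum_negf sum_distrib_left)
    qed
    also have "(\<Sum>i\<le>j. of_nat (j choose i) * (-1)^i * (\<Sum>l\<le>m'. of_nat (m' choose l) * of_nat i ^ l))
       = (\<Sum>l\<le>m'. of_nat (m' choose l) * (\<Sum>i\<le>j. of_nat (j choose i) * (-1)^i * of_nat i ^ l) :: complex)"
      by (simp add: sum_distrib_left sum_distrib_right mult_ac sum.swap[of _ "{..j}"])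
    also have "\<dots> = (\<Sum>l\<le>m'. of_nat (m' choose l) * (if l = j then (-1)^j * fact j else 0))"
      using mj by (intro sum.cong refl) (simp add: Suc.IH)
    also have "\<dots> = (if m' = j then (-1)^j * fact j else 0)"
      using mj by (simp add: if_distrib[of "\<lambda>x. _ * x"] sum.delta' cong: if_cong)
    finally have eq: "(\<Sum>i\<le>Suc j. of_nat (Suc j choose i) * (-1)^i * of_nat i ^ m :: complex)
        = - (of_nat (Suc j) * (if m' = j then (-1)^j * fact j else 0))" .
    have "- (of_nat (Suc j) * (if m' = j then (-1)^j * fact j else 0)) = (if m = Suc j then (-1)^Suc j * fact (Suc j) else (0::complex))"
      using Suc by (cases "m' = j") (simp_all add: algebra_simps)
    with eq show ?thesis by simp
  qed
qed

lemma eval_fps_decomp: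
  fixes H :: "complex fps"
  assumes "norm z < fps_conv_radius H"
  shows "eval_fps H z = (\<Sum>m<j. fps_nth H m * z^m) + z^j * eval_fps (fps_shift j H) z"
proof -
  have "(\<lambda>n. fps_nth (fps_shift j H) n * z ^ n) sums eval_fps (fps_shift j H) z"
    using assms by (intro sums_eval_fps) simp
  hence "(\<lambda>n. z^j * (fps_nth (fps_shift j H) n * z ^ n)) sums (z^j * eval_fps (fps_shift j H) z)"
    by (rule sums_mult)
  hence "(\<lambda>n. fps_nth H (n + j) * z ^ (n + j)) sums (z^j * eval_fps (fps_shift j H) z)"
    by (simp add: power_add mult_ac)
  hence "(\<lambda>n. fps_nth H n * z ^ n) sums (z^j * eval_fps (fps_shift j H) z + (\<Sum>m<j. fps_nth H m * z^m))"
    by (subst (asm) sums_iff_shift)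
  moreover have "(\<lambda>n. fps_nth H n * z ^ n) sums eval_fps H z"
    using assms by (rule sums_eval_fps)
  ultimately show ?thesis by (metis sums_unique2 add.commute)
qed

lemma fd_limit:
  fixes H :: "complex fps"
  assumes r: "fps_conv_radius H > 0"
  shows "((\<lambda>h. (\<Sum>i\<le>j. of_nat (j choose i) * (-1)^i * eval_fps H (of_nat i * h)) / h^j)
           \<longlongrightarrow> (-1)^j * fact j * fps_nth H j) (at 0)"
proof -
  define q where "q = fps_shift j H"
  from ereal_dense2[OF r] obtain e :: real where e: "0 < ereal e" "ereal e < fps_conv_radius H" by auto
  have epos: "e > 0" using e by simp
  have ev: "eventually (\<lambda>h. norm h < e / (of_nat j + 1) \<and> h \<noteq> 0) (at (0::complex))"
    using epos by (auto simp: eventually_at intro!: exI[of _ "e / (of_nat j + 1)"])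
  have eq: "(\<Sum>i\<le>j. of_nat (j choose i) * (-1)^i * eval_fps H (of_nat i * h)) / h^j
      = (\<Sum>i\<le>j. of_nat (j choose i) * (-1)^i * of_nat i ^ j * eval_fps q (of_nat i * h))"
    if h: "norm h < e / (of_nat j + 1)" "h \<noteq> 0" for h
  proof -
    have small: "norm (of_nat i * h) < fps_conv_radius H" if "i \<le> j" for i
    proof -
      have "norm (of_nat i * h) = of_nat i * norm h" by (simp add: norm_mult)
      also have "\<dots> \<le> (of_nat j + 1) * norm h"
        using that by (intro mult_right_mono) auto
      also have "\<dots> < e" using h by (simp add: field_simps)
      finally show ?thesis using e(2) by (metis less_ereal.simps(1) order.strict_trans)
    qed
    have "(\<Sum>i\<le>j. of_nat (j choose i) * (-1)^i * eval_fps H (of_nat i * h))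
       = (\<Sum>i\<le>j. of_nat (j choose i) * (-1)^i * ((\<Sum>m<j. fps_nth H m * (of_nat i * h)^m) + (of_nat i * h)^j * eval_fps q (of_nat i * h)))"
      using small by (intro sum.cong refl) (simp add: eval_fps_decomp q_def)
    also have "\<dots> = (\<Sum>m<j. fps_nth H m * h^m * (\<Sum>i\<le>j. of_nat (j choose i) * (-1)^i * of_nat i ^ m))
        + h^j * (\<Sum>i\<le>j. of_nat (j choose i) * (-1)^i * of_nat i ^ j * eval_fps q (of_nat i * h))"
      by (simp add: algebra_simps sum.distrib sum_distrib_left sum_distrib_right power_mult_distrib sum.swap[of _ "{..j}"])
    also have "(\<Sum>m<j. fps_nth H m * h^m * (\<Sum>i\<le>j. of_nat (j choose i) * (-1)^i * of_nat i ^ m)) = 0"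
      by (intro sum.neutral) (simp add: alt_binom_pow)
    finally show ?thesis using h by simp
  qed
  have lim: "((\<lambda>h. \<Sum>i\<le>j. of_nat (j choose i) * (-1)^i * of_nat i ^ j * eval_fps q (of_nat i * h))
      \<longlongrightarrow> (\<Sum>i\<le>j. of_nat (j choose i) * (-1)^i * of_nat i ^ j * eval_fps q (of_nat i * 0))) (at 0)"
  proof (intro tendsto_intros)
    fix i
    have "isCont (eval_fps q) (of_nat i * 0)" unfolding q_def using r by (intro continuous_eval_fps) (simp add: zero_ereal_def)
    moreover have "((\<lambda>h. of_nat i * h) \<longlongrightarrow> of_nat i * (0::complex)) (at 0)" by (intro tendsto_intros)
    ultimately show "((\<lambda>h. eval_fps q (of_nat i * h)) \<longlongrightarrow> eval_fps q (of_nat i * 0)) (at 0)"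
      by (rule isCont_tendsto_compose)
  qed
  have val: "(\<Sum>i\<le>j. of_nat (j choose i) * (-1)^i * of_nat i ^ j * eval_fps q (of_nat i * 0))
     = (-1)^j * fact j * fps_nth H j"
    using alt_binom_pow[of j j] by (simp add: eval_fps_at_0 q_def sum_distrib_right[symmetric])
  show ?thesis
    using lim unfolding val
    by (rule Lim_transform_eventually) (rule eventually_mono[OF ev], simp add: eq)
qed



lemma pow2_inv_lim: "(\<lambda>N::nat. y / 2^N) \<longlonglongrightarrow> (0::real)"
proof -
  have "(\<lambda>N::nat. y * (1/2)^N) \<longlonglongrightarrow> y * 0"
    by (intro tendsto_intros LIMSEQ_realpow_zero) auto
  thus ?thesis by (simp add: power_divide)
qed

lemma seq_lim: "(\<lambda>N::nat. 2^N * (1 - exp (- y / 2^N))) \<longlonglongrightarrow> (y::real)"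
proof (cases "y = 0")
  case True then show ?thesis by simp
next
  case False
  define t where "t N = - y / 2^N" for N :: nat
  have t0: "t \<longlonglongrightarrow> 0" unfolding t_def using pow2_inv_lim[of "-y"] by simp
  have "filterlim t (at 0) sequentially"
    using t0 False by (intro filterlim_atI) (auto simp: t_def)
  moreover have "((\<lambda>h. (exp (0 + h) - exp 0) / h) \<longlongrightarrow> (1::real)) (at 0)"
    using DERIV_exp[of 0] unfolding DERIV_def by simp
  ultimately have "(\<lambda>N. (exp (t N) - 1) / t N) \<longlonglongrightarrow> 1"
    by (simp add: filterlim_compose[of "\<lambda>h. (exp h - 1) / h"])
  hence "(\<lambda>N. y * ((exp (t N) - 1) / t N)) \<longlonglongrightarrow> y * 1" by (intro tendsto_intros)
  moreover have "y * ((exp (t N) - 1) / t N) = 2^N * (1 - exp (- y / 2^N))" for N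
    using False by (simp add: t_def field_simps)
  ultimately show ?thesis by simp
qed

lemma step_mono:
  assumes "y \<ge> (0::real)"
  shows "2^N * (1 - exp (- y / 2^N)) \<le> 2^Suc N * (1 - exp (- y / 2^Suc N))"
proof -
  define e where "e = exp (- y / 2^Suc N)"
  have e1: "e \<le> 1" "e > 0" using assms by (auto simp: e_def)
  have "exp (- y / 2^N) = e^2"
    by (simp add: e_def exp_of_nat_mult[symmetric] power2_eq_square exp_add[symmetric])
  hence "2^N * (1 - exp (- y / 2^N)) = 2^N * ((1 - e) * (1 + e))" by (simp add: algebra_simps power2_eq_square)
  also have "\<dots> \<le> 2^N * ((1 - e) * 2)" using e1 by (intro mult_left_mono) auto
  also have "\<dots> = 2^Suc N * (1 - exp (- y / 2^Suc N))" by (simp add: e_def)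
  finally show ?thesis .
qed



lemma moment_from_laplace:
  fixes Y :: "'a \<Rightarrow> real" and H :: "complex fps"
  assumes P: "prob_space M" and Ym: "Y \<in> borel_measurable M"
    and Yn: "\<And>\<omega>. \<omega> \<in> space M \<Longrightarrow> Y \<omega> \<ge> 0"
    and r: "fps_conv_radius H > 0" and d: "\<delta> > 0"
    and L: "\<And>x. 0 \<le> x \<Longrightarrow> x < \<delta> \<Longrightarrow>
       complex_of_real (integral\<^sup>L M (\<lambda>\<omega>. exp (- x * Y \<omega>))) = eval_fps H (of_real x)"
  shows "integrable M (\<lambda>\<omega>. Y \<omega> ^ j) \<and>
         complex_of_real (integral\<^sup>L M (\<lambda>\<omega>. Y \<omega> ^ j)) = (-1)^j * fact j * fps_nth H j"
proof -
  interpret prob_space M by (rule P)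
  define f where "f N \<omega> = (2^N * (1 - exp (- Y \<omega> / 2^N)))^j" for N :: nat and \<omega>
  define Lc where "Lc = (-1)^j * fact j * fps_nth H j"
  have ex_int: "integrable M (\<lambda>\<omega>. exp (- x * Y \<omega>))" if "x \<ge> 0" for x
    using Ym that by (intro integrable_const_bound[where B=1]) (auto intro!: AE_I2 simp: Yn mult_nonneg_nonneg)
  have f_alt: "f N \<omega> = (2^N)^j * (\<Sum>i\<le>j. of_nat (j choose i) * (-1)^i * exp (- (real i / 2^N) * Y \<omega>))" for N \<omega>
  proof -
    have "f N \<omega> = (2^N)^j * (1 - exp (- Y \<omega> / 2^N))^j" by (simp add: f_def power_mult_distrib)
    also have "(1 - exp (- Y \<omega> / 2^N))^j = (\<Sum>i\<le>j. of_nat (j choose i) * (- exp (- Y \<omega> / 2^N))^i * 1^(j-i))"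
      using binomial_ring[of "- exp (- Y \<omega> / 2^N)" 1 j] by (simp add: add.commute)
    also have "\<dots> = (\<Sum>i\<le>j. of_nat (j choose i) * (-1)^i * exp (- (real i / 2^N) * Y \<omega>))"
    proof (intro sum.cong refl)
      fix i
      have "exp (- Y \<omega> / 2^N) ^ i = exp (real i * (- Y \<omega> / 2^N))" by (rule exp_of_nat_mult[symmetric])
      also have "real i * (- Y \<omega> / 2^N) = - (real i / 2^N) * Y \<omega>" by simp
      finally have e: "exp (- Y \<omega> / 2^N) ^ i = exp (- (real i / 2^N) * Y \<omega>)" .
      show "of_nat (j choose i) * (- exp (- Y \<omega> / 2^N))^i * 1^(j-i) = of_nat (j choose i) * (-1)^i * exp (- (real i / 2^N) * Y \<omega>)"
        by (simp only: power_minus[of "exp _"] e power_one mult_1_right mult.assoc)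
    qed
    finally show ?thesis .
  qed
  have f_int: "integrable M (f N)" for N
    unfolding f_alt
  proof (rule integrable_mult_right, rule Bochner_Integration.integrable_sum)
    fix i assume "i \<in> {..j}"
    show "integrable M (\<lambda>\<omega>. of_nat (j choose i) * (-1)^i * exp (- (real i / 2^N) * Y \<omega>))"
      by (rule integrable_mult_right, rule ex_int) simp
  qed
  have f_integral: "integral\<^sup>L M (f N) = (2^N)^j * (\<Sum>i\<le>j. of_nat (j choose i) * (-1)^i * integral\<^sup>L M (\<lambda>\<omega>. exp (- (real i / 2^N) * Y \<omega>)))" for N
  proof -
    have "integral\<^sup>L M (f N) = (2^N)^j * integral\<^sup>L M (\<lambda>\<omega>. \<Sum>i\<le>j. of_nat (j choose i) * (-1)^i * exp (- (real i / 2^N) * Y \<omega>))"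
      unfolding f_alt by (rule integral_mult_right_zero)
    also have "integral\<^sup>L M (\<lambda>\<omega>. \<Sum>i\<le>j. of_nat (j choose i) * (-1)^i * exp (- (real i / 2^N) * Y \<omega>))
      = (\<Sum>i\<le>j. integral\<^sup>L M (\<lambda>\<omega>. of_nat (j choose i) * (-1)^i * exp (- (real i / 2^N) * Y \<omega>)))"
      by (rule Bochner_Integration.integral_sum) (intro integrable_mult_right ex_int, simp)
    also have "\<dots> = (\<Sum>i\<le>j. of_nat (j choose i) * (-1)^i * integral\<^sup>L M (\<lambda>\<omega>. exp (- (real i / 2^N) * Y \<omega>)))"
      by (simp only: integral_mult_right_zero)
    finally show ?thesis .
  qed
  define g where "g h = (\<Sum>i\<le>j. of_nat (j choose i) * (-1)^i * eval_fps H (of_nat i * h)) / h^j" for h :: complex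
  have glim: "(g \<longlongrightarrow> Lc) (at 0)" unfolding g_def Lc_def by (rule fd_limit[OF r])
  define hs where "hs N = complex_of_real (1 / 2^N)" for N :: nat
  have "hs \<longlonglongrightarrow> complex_of_real 0" unfolding hs_def using pow2_inv_lim[of 1] by (intro tendsto_intros)
  hence hsf: "filterlim hs (at 0) sequentially" by (intro filterlim_atI) (auto simp: hs_def)
  have gl: "(\<lambda>N. g (hs N)) \<longlonglongrightarrow> Lc" by (rule filterlim_compose[OF glim hsf])
  have "eventually (\<lambda>N. real j / 2^N < \<delta>) sequentially"
    using pow2_inv_lim[of "real j"] d by (rule order_tendstoD)
  hence ev2: "eventually (\<lambda>N. complex_of_real (integral\<^sup>L M (f N)) = g (hs N)) sequentially"
  proof (rule eventually_mono)
    fix N assume N: "real j / 2^N < \<delta>"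
    have "complex_of_real (integral\<^sup>L M (f N)) = (2^N)^j * (\<Sum>i\<le>j. of_nat (j choose i) * (-1)^i * complex_of_real (integral\<^sup>L M (\<lambda>\<omega>. exp (- (real i / 2^N) * Y \<omega>))))"
      unfolding f_integral by (simp only: of_real_mult of_real_sum of_real_power of_real_of_nat_eq of_real_numeral of_real_minus of_real_1)
    also have "\<dots> = (2^N)^j * (\<Sum>i\<le>j. of_nat (j choose i) * (-1)^i * eval_fps H (of_real (real i / 2^N)))"
    proof -
      have Li: "complex_of_real (integral\<^sup>L M (\<lambda>\<omega>. exp (- (real i / 2^N) * Y \<omega>))) = eval_fps H (of_real (real i / 2^N))"
        if "i \<in> {..j}" for i
      proof -
        from that have "real i / 2^N \<le> real j / 2^N" by (intro divide_right_mono) auto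
        thus ?thesis using N by (intro L) auto
      qed
      show ?thesis by (simp only: Li cong: sum.cong)
    qed
    also have "\<dots> = g (hs N)"
    proof -
      have a: "complex_of_real (real i / 2^N) = of_nat i * hs N" for i by (simp add: hs_def)
      have b0: "hs N * 2^N = 1" by (simp add: hs_def)
      have b: "hs N ^ j * (2^N)^j = 1" by (metis b0 power_mult_distrib power_one)
      have "g (hs N) = (\<Sum>i\<le>j. of_nat (j choose i) * (-1)^i * eval_fps H (of_real (real i / 2^N))) / hs N ^ j"
        unfolding g_def a ..
      also have "\<dots> = (2^N)^j * (\<Sum>i\<le>j. of_nat (j choose i) * (-1)^i * eval_fps H (of_real (real i / 2^N)))"
        by (simp only: divide_inverse inverse_unique[OF b] mult.commute)
      finally show ?thesis ..
    qed
    finally show "complex_of_real (integral\<^sup>L M (f N)) = g (hs N)" .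
  qed
  have cl: "(\<lambda>N. complex_of_real (integral\<^sup>L M (f N))) \<longlonglongrightarrow> Lc"
    by (rule Lim_transform_eventually[OF gl]) (rule eventually_mono[OF ev2], simp)
  hence rl: "(\<lambda>N. integral\<^sup>L M (f N)) \<longlonglongrightarrow> Re Lc"
    using tendsto_Re[OF cl] by simp
  have "(\<lambda>N. complex_of_real (integral\<^sup>L M (f N))) \<longlonglongrightarrow> complex_of_real (Re Lc)"
    using rl by (rule tendsto_of_real)
  hence Lreal: "complex_of_real (Re Lc) = Lc" using cl by (rule LIMSEQ_unique)
  have mono: "AE \<omega> in M. mono (\<lambda>N. f N \<omega>)"
  proof (rule AE_I2)
    fix \<omega> assume "\<omega> \<in> space M"
    hence y: "Y \<omega> \<ge> 0" by (rule Yn)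
    show "mono (\<lambda>N. f N \<omega>)"
    proof (rule incseq_SucI)
      fix N
      have "0 \<le> 2^N * (1 - exp (- Y \<omega> / 2^N))" using y by auto
      thus "f N \<omega> \<le> f (Suc N) \<omega>" unfolding f_def by (intro power_mono step_mono y)
    qed
  qed
  have lim: "AE \<omega> in M. (\<lambda>N. f N \<omega>) \<longlonglongrightarrow> Y \<omega> ^ j"
    unfolding f_def by (intro AE_I2 tendsto_intros seq_lim)
  have "integrable M (\<lambda>\<omega>. Y \<omega> ^ j)" "integral\<^sup>L M (\<lambda>\<omega>. Y \<omega> ^ j) = Re Lc"
    using integrable_monotone_convergence[OF f_int mono lim rl]
          integral_monotone_convergence[OF f_int mono lim rl] Ym by auto
  thus ?thesis using Lreal by (simp add: Lc_def)
qed



definition phic :: "(nat \<Rightarrow> real) \<Rightarrow> nat \<Rightarrow> real" where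
  "phic c m = (if m = 0 then 0 else c m / fact m)"

definition Gc :: "(nat \<Rightarrow> real) \<Rightarrow> real \<Rightarrow> complex fps" where
  "Gc c s = Abs_fps (\<lambda>m. complex_of_real (s^m * phic c m))"

lemma phi_fps_nth: "phi_fps c $ m = phic c m"
  by (simp add: phi_fps_def phic_def)

lemma Gc_nth: "Gc c s $ m = complex_of_real (s^m * phi_fps c $ m)"
  by (simp add: Gc_def phi_fps_nth)

lemma Gc_power_nth:
  "(Gc c s ^ i) $ n = complex_of_real (s^n * ((phi_fps c ^ i) $ n))"
proof (induction i arbitrary: n)
  case 0 then show ?case by (cases n) simp_all
next
  case (Suc i)
  have "(Gc c s ^ Suc i) $ n = (\<Sum>l=0..n. Gc c s $ l * (Gc c s ^ i) $ (n - l))"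
    by (simp add: fps_mult_nth)
  also have "\<dots> = (\<Sum>l=0..n. complex_of_real (s^n * (phi_fps c $ l * (phi_fps c ^ i) $ (n - l))))"
  proof (intro sum.cong refl)
    fix l assume "l \<in> {0..n}"
    hence "s^l * s^(n-l) = s^n" by (simp add: power_add[symmetric])
    thus "Gc c s $ l * (Gc c s ^ i) $ (n - l) = complex_of_real (s^n * (phi_fps c $ l * (phi_fps c ^ i) $ (n - l)))"
      by (simp only: Gc_nth Suc.IH of_real_mult[symmetric]) (metis (no_types, lifting) mult.assoc mult.left_commute)
  qed
  also have "\<dots> = complex_of_real (s^n * ((phi_fps c ^ Suc i) $ n))"
    by (simp add: fps_mult_nth sum_distrib_left)
  finally show ?case .
qed

lemma compose_nth:
  "(fps_exp (complex_of_real a) oo Gc c s) $ j = complex_of_real (s^j * (fps_exp a oo phi_fps c) $ j)"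
  by (simp add: fps_compose_nth Gc_power_nth sum_distrib_left mult_ac)

lemma Gc_radius:
  assumes "phi_radius c > 0" "s \<noteq> 0"
  shows "fps_conv_radius (Gc c s) > 0"
proof -
  have "fps_conv_radius (Gc c s) = conv_radius (\<lambda>m. complex_of_real (phic c m * s^m))"
    by (simp add: fps_conv_radius_def Gc_def mult.commute)
  also have "\<dots> = conv_radius (\<lambda>m. norm (complex_of_real (phic c m * s^m)))"
    by (rule conv_radius_norm[symmetric])
  also have "\<dots> = conv_radius (\<lambda>m. norm (phic c m * s^m))" by (simp only: norm_of_real real_norm_def)
  also have "\<dots> = conv_radius (\<lambda>m. phic c m * s^m)" by (rule conv_radius_norm)
  also have "\<dots> = conv_radius (phic c) / ereal (norm s)" using assms(2) by (rule conv_radius_mult_power_right)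
  also have "conv_radius (phic c) = phi_radius c" by (simp add: phi_radius_def phic_def[abs_def])
  finally have eq: "fps_conv_radius (Gc c s) = phi_radius c / ereal \<bar>s\<bar>" by simp
  show ?thesis unfolding eq using assms
    by (cases "phi_radius c") (auto simp: ereal_divide divide_ereal_def)
qed

lemma eval_Gc:
  assumes "ereal \<bar>s * x\<bar> < phi_radius c"
  shows "eval_fps (Gc c s) (complex_of_real x) = complex_of_real (phi_series c (s * x))"
proof -
  have summ: "summable (\<lambda>m. phic c m * (s*x)^m)"
    using assms unfolding phi_radius_def phic_def[abs_def]
    by (intro summable_in_conv_radius) simp
  have "(\<lambda>m. phic c m * (s*x)^m) sums phi_series c (s*x)"
  proof -
    have s1: "summable (\<lambda>m. phic c (Suc m) * (s*x)^Suc m)" using summable_Suc_iff[of "\<lambda>m. phic c m * (s*x)^m"] summ by blast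
    have e1: "(\<lambda>m. c (Suc m)/fact(Suc m) * (s*x)^Suc m) = (\<lambda>m. phic c (Suc m) * (s*x)^Suc m)" by (simp add: phic_def)
    have "(\<lambda>m. phic c (Suc m) * (s*x)^(Suc m)) sums phi_series c (s*x)"
      unfolding phi_series_def e1 by (rule summable_sums[OF s1])
    moreover have "phic c 0 = 0" by (simp add: phic_def)
    ultimately show ?thesis using sums_Suc_iff[of "\<lambda>m. phic c m * (s*x)^m" "phi_series c (s*x)"] by simp
  qed
  hence "(\<lambda>m. complex_of_real (phic c m * (s*x)^m)) sums complex_of_real (phi_series c (s*x))"
    by (rule sums_of_real)
  moreover have "(\<lambda>m. complex_of_real (phic c m * (s*x)^m)) = (\<lambda>m. Gc c s $ m * (complex_of_real x)^m)"
    by (simp add: Gc_def power_mult_distrib mult_ac)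
  ultimately show ?thesis unfolding eval_fps_def by (simp add: sums_iff)
qed



lemma moment_sigma:
  fixes Y :: "'a \<Rightarrow> real"
  assumes P: "prob_space M" and Ym: "Y \<in> borel_measurable M"
    and Yn: "\<And>\<omega>. \<omega> \<in> space M \<Longrightarrow> Y \<omega> \<ge> 0"
    and R: "phi_radius c > 0" and fS: "\<And>x. ereal \<bar>x\<bar> < phi_radius c \<Longrightarrow> f x = phi_series c x"
    and b: "b > 0"
    and Lap: "\<And>x. x \<ge> 0 \<Longrightarrow> integral\<^sup>L M (\<lambda>\<omega>. exp (- x * Y \<omega>)) = exp (a * f (- x / b))"
  shows "integrable M (\<lambda>\<omega>. Y \<omega> ^ j) \<and> integral\<^sup>L M (\<lambda>\<omega>. Y \<omega> ^ j) = sigma c j a / b^j"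
proof -
  define s where "s = - 1 / b"
  have s0: "s \<noteq> 0" using b by (simp add: s_def)
  define H where "H = fps_exp (complex_of_real a) oo Gc c s"
  have rG: "fps_conv_radius (Gc c s) > 0" using R s0 by (rule Gc_radius)
  have G0: "Gc c s $ 0 = 0" by (simp add: Gc_nth phi_fps_nth phic_def)
  have exp_H: "((\<lambda>z. exp (complex_of_real a * z)) \<circ> eval_fps (Gc c s)) has_fps_expansion H"
    unfolding H_def
    by (rule has_fps_expansion_compose[OF has_fps_expansion_exp eval_fps_has_fps_expansion[OF rG] G0])
  hence rH: "fps_conv_radius H > 0" and evH: "eventually (\<lambda>z. eval_fps H z = exp (complex_of_real a * eval_fps (Gc c s) z)) (nhds 0)"
    by (auto simp: has_fps_expansion_def)
  from evH obtain d1 where d1: "d1 > 0" "\<And>z. dist z 0 < d1 \<Longrightarrow> eval_fps H z = exp (complex_of_real a * eval_fps (Gc c s) z)"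
    unfolding eventually_nhds_metric by blast
  from ereal_dense2[OF R] obtain e :: real where e: "0 < ereal e" "ereal e < phi_radius c" by auto
  have epos: "e > 0" using e by simp
  define \<delta> where "\<delta> = min d1 (e * b)"
  have dpos: "\<delta> > 0" using d1 epos b by (simp add: \<delta>_def)
  have L: "complex_of_real (integral\<^sup>L M (\<lambda>\<omega>. exp (- x * Y \<omega>))) = eval_fps H (of_real x)"
    if x: "0 \<le> x" "x < \<delta>" for x
  proof -
    have "x / b < e" using x b by (simp add: \<delta>_def field_simps)
    hence small: "ereal (x / b) < phi_radius c" using e(2) by (metis less_ereal.simps(1) order.strict_trans)
    have sx: "s * x = - x / b" by (simp add: s_def)
    have f1: "f (- x / b) = phi_series c (s * x)"
      using small x b by (subst fS) (auto simp: sx abs_divide)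
    have g1: "eval_fps (Gc c s) (complex_of_real x) = complex_of_real (phi_series c (s * x))"
      using small x b by (intro eval_Gc) (simp add: sx abs_divide)
    have "complex_of_real (integral\<^sup>L M (\<lambda>\<omega>. exp (- x * Y \<omega>))) = complex_of_real (exp (a * phi_series c (s * x)))"
      using Lap[OF x(1)] f1 by simp
    also have "\<dots> = exp (complex_of_real a * eval_fps (Gc c s) (complex_of_real x))"
      by (simp add: g1 exp_of_real[symmetric])
    also have "\<dots> = eval_fps H (of_real x)"
      using x by (intro d1(2)[symmetric]) (simp add: \<delta>_def)
    finally show ?thesis .
  qed
  have main: "integrable M (\<lambda>\<omega>. Y \<omega> ^ j) \<and>
         complex_of_real (integral\<^sup>L M (\<lambda>\<omega>. Y \<omega> ^ j)) = (-1)^j * fact j * fps_nth H j"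
    by (rule moment_from_laplace[OF P Ym Yn rH dpos L])
  have "(-1)^j * fact j * fps_nth H j = complex_of_real ((-1)^j * s^j * sigma c j a)"
    by (simp add: H_def compose_nth sigma_def)
  also have "(-1)^j * s^j = 1 / b^j"
  proof -
    have "(-1)^j * s^j = ((-1) * s)^j" by (simp only: power_mult_distrib)
    also have "(-1) * s = 1 / b" by (simp add: s_def)
    finally show ?thesis by (simp add: power_one_over)
  qed
  finally have eq: "(-1)^j * fact j * fps_nth H j = complex_of_real (1 / b^j * sigma c j a)" .
  have "complex_of_real (integral\<^sup>L M (\<lambda>\<omega>. Y \<omega> ^ j)) = complex_of_real (1 / b^j * sigma c j a)"
    using main eq by metis
  hence "integral\<^sup>L M (\<lambda>\<omega>. Y \<omega> ^ j) = 1 / b^j * sigma c j a" by (rule of_real_eq_iff[THEN iffD1])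
  thus ?thesis using main by simp
qed



lemma alg_id:
  fixes Bk F fk PS S :: real
  assumes "Bk > 0" "F > 0"
  shows "fk * PS / (S * F) = fk / F * (PS / Bk) / (S / Bk)"
  using assms by (cases "S = 0") (simp_all add: field_simps)

theorem proposition11:
  fixes c :: "nat \<Rightarrow> real" and f :: "real \<Rightarrow> real" and \<theta> :: real and n k :: nat
    and M :: "'a measure" and X :: "nat \<Rightarrow> 'a \<Rightarrow> real" and ks :: "nat \<Rightarrow> nat"
  assumes c_nonneg: "\<And>m. m \<ge> 1 \<Longrightarrow> c m \<ge> 0"
    and c1_pos: "c 1 > 0"
    and radius_pos: "phi_radius c > 0"
    and classS: "in_class_S c f"
    and theta_pos: "\<theta> > 0"
    and n_pos: "n \<ge> 1" and k_pos: "k \<ge> 1"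
    and prob: "prob_space M"
    and rv: "\<And>m. m \<in> {1..n} \<Longrightarrow> X m \<in> borel_measurable M"
    and indep: "prob_space.indep_vars M (\<lambda>_. borel) X {1..n}"
    and ident: "\<And>m. m \<in> {1..n} \<Longrightarrow> distr M borel (X m) = distr M borel (X 1)"
    and nonneg: "\<And>m \<omega>. m \<in> {1..n} \<Longrightarrow> \<omega> \<in> space M \<Longrightarrow> X m \<omega> \<ge> 0"
    and mean1: "integrable M (X 1)" "prob_space.expectation M (X 1) = 1"
    and laplace: "\<And>x. x \<ge> 0 \<Longrightarrow>
        prob_space.expectation M (\<lambda>\<omega>. exp (- x * X 1 \<omega>)) = exp (\<theta> * f (- x / (\<theta> * c 1)))"
    and ks_sum: "(\<Sum>m\<in>{1..n}. ks m) = k"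
  shows "K_prob c \<theta> n k ks =
           multinomial_coeff n k ks *
             (\<Prod>m\<in>{1..n}. prob_space.expectation M (\<lambda>\<omega>. X m \<omega> ^ ks m))
             / prob_space.expectation M (\<lambda>\<omega>. (\<Sum>m\<in>{1..n}. X m \<omega>) ^ k)
       \<and> K_prob c \<theta> n k ks =
           multinomial_coeff n k ks *
             prob_space.expectation M (\<lambda>\<omega>. (\<Sum>m\<in>{1..n}. X m \<omega>) ^ k *
                 (\<Prod>m\<in>{1..n}. (X m \<omega> / (\<Sum>i\<in>{1..n}. X i \<omega>)) ^ ks m))
             / prob_space.expectation M (\<lambda>\<omega>. (\<Sum>m\<in>{1..n}. X m \<omega>) ^ k)"
proof -
  interpret prob_space M by (rule prob)
  define b where "b = \<theta> * c 1"
  have b: "b > 0" using theta_pos c1_pos by (simp add: b_def)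
  have fS: "\<And>x. ereal \<bar>x\<bar> < phi_radius c \<Longrightarrow> f x = phi_series c x"
    using classS by (simp add: in_class_S_def)
  have lapm: "integral\<^sup>L M (\<lambda>\<omega>. exp (- x * X m \<omega>)) = exp (\<theta> * f (- x / b))"
    if m: "m \<in> {1..n}" and x: "x \<ge> 0" for m x
  proof -
    have meas: "(\<lambda>y. exp (- x * y)) \<in> borel_measurable (borel :: real measure)" by measurable
    have "integral\<^sup>L M (\<lambda>\<omega>. exp (- x * X m \<omega>)) = integral\<^sup>L (distr M borel (X m)) (\<lambda>y. exp (- x * y))"
      using rv[OF m] meas by (simp add: integral_distr)
    also have "\<dots> = integral\<^sup>L (distr M borel (X 1)) (\<lambda>y. exp (- x * y))" using ident[OF m] by simp
    also have "\<dots> = integral\<^sup>L M (\<lambda>\<omega>. exp (- x * X 1 \<omega>))"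
      using rv[of 1] n_pos meas by (simp add: integral_distr)
    also have "\<dots> = exp (\<theta> * f (- x / b))" using laplace[OF x] by (simp add: b_def)
    finally show ?thesis .
  qed
  have mom: "integrable M (\<lambda>\<omega>. X m \<omega> ^ j) \<and> integral\<^sup>L M (\<lambda>\<omega>. X m \<omega> ^ j) = sigma c j \<theta> / b^j"
    if m: "m \<in> {1..n}" for m j
    by (rule moment_sigma[OF prob rv[OF m] nonneg[OF m] radius_pos fS b lapm[OF m]])
  define Xb where "Xb \<omega> = (\<Sum>m\<in>{1..n}. X m \<omega>)" for \<omega>
  have Xbm: "Xb \<in> borel_measurable M" unfolding Xb_def using rv by measurable
  have Xbn: "\<And>\<omega>. \<omega> \<in> space M \<Longrightarrow> Xb \<omega> \<ge> 0" unfolding Xb_def using nonneg by (intro sum_nonneg) auto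
  have lapb: "integral\<^sup>L M (\<lambda>\<omega>. exp (- x * Xb \<omega>)) = exp ((real n * \<theta>) * f (- x / b))"
    if x: "x \<ge> 0" for x
  proof -
    have ind: "indep_vars (\<lambda>_. borel) (\<lambda>m \<omega>. exp (- x * X m \<omega>)) {1..n}"
      by (rule indep_vars_compose2[OF indep]) measurable
    have "integral\<^sup>L M (\<lambda>\<omega>. exp (- x * Xb \<omega>)) = integral\<^sup>L M (\<lambda>\<omega>. \<Prod>m\<in>{1..n}. exp (- x * X m \<omega>))"
      by (simp add: Xb_def sum_distrib_left exp_sum sum_negf[symmetric])
    also have "\<dots> = (\<Prod>m\<in>{1..n}. integral\<^sup>L M (\<lambda>\<omega>. exp (- x * X m \<omega>)))"
    proof (rule indep_vars_lebesgue_integral)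
      show "finite {1..n}" by simp
      show "indep_vars (\<lambda>_. borel) (\<lambda>m \<omega>. exp (- x * X m \<omega>)) {1..n}" by (rule ind)
      fix m assume m: "m \<in> {1..n}"
      show "integrable M (\<lambda>\<omega>. exp (- x * X m \<omega>))"
        using rv[OF m] nonneg[OF m] x
        by (intro integrable_const_bound[where B=1]) (auto intro!: AE_I2 simp: mult_nonneg_nonneg)
    qed
    also have "\<dots> = (\<Prod>m\<in>{1..n}. exp (\<theta> * f (- x / b)))" using lapm x by simp
    also have "\<dots> = exp (\<theta> * f (- x / b)) ^ n" by simp
    also have "\<dots> = exp ((real n * \<theta>) * f (- x / b))" by (simp add: exp_of_nat_mult[symmetric] mult_ac)
    finally show ?thesis .
  qed
  have momb: "integrable M (\<lambda>\<omega>. Xb \<omega> ^ k) \<and> integral\<^sup>L M (\<lambda>\<omega>. Xb \<omega> ^ k) = sigma c k (real n * \<theta>) / b^k"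
    by (rule moment_sigma[OF prob Xbm Xbn radius_pos fS b lapb])
  have prodm: "(\<Prod>m\<in>{1..n}. integral\<^sup>L M (\<lambda>\<omega>. X m \<omega> ^ ks m)) = (\<Prod>m\<in>{1..n}. sigma c (ks m) \<theta>) / b^k"
  proof -
    have "(\<Prod>m\<in>{1..n}. integral\<^sup>L M (\<lambda>\<omega>. X m \<omega> ^ ks m)) = (\<Prod>m\<in>{1..n}. sigma c (ks m) \<theta> / b^(ks m))"
      using mom by (intro prod.cong refl) blast
    also have "\<dots> = (\<Prod>m\<in>{1..n}. sigma c (ks m) \<theta>) / (\<Prod>m\<in>{1..n}. b^(ks m))" by (rule prod_dividef)
    also have "(\<Prod>m\<in>{1..n}. b^(ks m)) = b^k" by (metis power_sum ks_sum)
    finally show ?thesis .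
  qed
  define S where "S = sigma c k (real n * \<theta>)"
  define PS where "PS = (\<Prod>m\<in>{1..n}. sigma c (ks m) \<theta>)"
  define F where "F = (\<Prod>m\<in>{1..n}. fact (ks m) :: real)"
  have Fpos: "F > 0" unfolding F_def by (intro prod_pos) auto
  have Kp: "K_prob c \<theta> n k ks = fact k * PS / (S * F)"
    unfolding K_prob_def S_def PS_def F_def by (simp add: prod_dividef)
  have first: "K_prob c \<theta> n k ks = multinomial_coeff n k ks *
             (\<Prod>m\<in>{1..n}. integral\<^sup>L M (\<lambda>\<omega>. X m \<omega> ^ ks m)) / integral\<^sup>L M (\<lambda>\<omega>. Xb \<omega> ^ k)"
  proof -
    have bk: "b^k > 0" using b by simp
    show ?thesis
      unfolding Kp prodm momb[THEN conjunct2] multinomial_coeff_def S_def[symmetric] PS_def[symmetric] F_def[symmetric]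
      by (rule alg_id[OF bk Fpos])
  qed
  have pw: "Xb \<omega> ^ k * (\<Prod>m\<in>{1..n}. (X m \<omega> / Xb \<omega>) ^ ks m) = (\<Prod>m\<in>{1..n}. X m \<omega> ^ ks m)"
    if \<omega>: "\<omega> \<in> space M" for \<omega>
  proof (cases "Xb \<omega> = 0")
    case True
    have all0: "\<forall>m\<in>{1..n}. X m \<omega> = 0"
      using True unfolding Xb_def by (subst (asm) sum_nonneg_eq_0_iff) (auto intro: nonneg[OF _ \<omega>])
    have "X m \<omega> = 0" if "m \<in> {1..n}" for m using all0 that by blast
    moreover obtain m where m: "m \<in> {1..n}" "ks m \<ge> 1"
    proof -
      have "\<not> (\<forall>m\<in>{1..n}. ks m = 0)"
      proof
        assume "\<forall>m\<in>{1..n}. ks m = 0"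
        hence "(\<Sum>m\<in>{1..n}. ks m) = 0" by (rule sum.neutral)
        thus False using ks_sum k_pos by simp
      qed
      thus ?thesis using that by auto
    qed
    ultimately have "(\<Prod>m\<in>{1..n}. X m \<omega> ^ ks m) = 0"
      by (intro prod_zero bexI[OF _ m(1)]) (use m in auto)
    then show ?thesis using True k_pos by (simp add: power_0_left)
  next
    case False
    have "(\<Prod>m\<in>{1..n}. (X m \<omega> / Xb \<omega>) ^ ks m) = (\<Prod>m\<in>{1..n}. X m \<omega> ^ ks m) / (\<Prod>m\<in>{1..n}. Xb \<omega> ^ ks m)"
      by (simp add: power_divide prod_dividef)
    also have "(\<Prod>m\<in>{1..n}. Xb \<omega> ^ ks m) = Xb \<omega> ^ k" by (metis power_sum ks_sum)
    finally show ?thesis using False by simp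
  qed
  have indp: "integral\<^sup>L M (\<lambda>\<omega>. \<Prod>m\<in>{1..n}. X m \<omega> ^ ks m) = (\<Prod>m\<in>{1..n}. integral\<^sup>L M (\<lambda>\<omega>. X m \<omega> ^ ks m))"
  proof (rule indep_vars_lebesgue_integral)
    show "finite {1..n}" by simp
    show "indep_vars (\<lambda>_. borel) (\<lambda>m \<omega>. X m \<omega> ^ ks m) {1..n}"
      by (rule indep_vars_compose2[OF indep]) measurable
    fix m assume m: "m \<in> {1..n}"
    show "integrable M (\<lambda>\<omega>. X m \<omega> ^ ks m)" using mom[OF m] by blast
  qed
  have second: "integral\<^sup>L M (\<lambda>\<omega>. Xb \<omega> ^ k * (\<Prod>m\<in>{1..n}. (X m \<omega> / Xb \<omega>) ^ ks m))
      = (\<Prod>m\<in>{1..n}. integral\<^sup>L M (\<lambda>\<omega>. X m \<omega> ^ ks m))"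
    using pw indp by (simp cong: Bochner_Integration.integral_cong)
  show ?thesis using first second unfolding Xb_def by simp
qed


end
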